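(* Assume the setting below and let $M\geq 2$. There exists a constant $\widehat C=\widehat C(M)\geq 0$ such that for every function $f\in C^{2M}(\mathbb R^d;\mathbb R)$, $$\Big|\,\mathbb E\big[f(\widetilde X^{t_n,x,a}_{t_{n+1}})\big]-\mathbb E\big[f(\widehat X^{t_n,x,a}_{t_{n+1}})\big]\,\Big|\leq \widehat C\,\|D^{(2M)}f\|_\infty\,(1+|x|^{2M})\,h^M$$ for all $x\in\mathbb R^d$, $a\in A$, $h\geq0$ and $n=0,\ldots,N-1$.
   Context: Let $T>0$, $d,q\ge1$, $p=1$, let $B$ be a one-dimensional Brownian motion, let $A\subseteq\mathbb R^q$ be a compact subset of a separable metric space, and let $\mu:[0,T]\times\mathbb R^d\times A\to\mathbb R^d$, $\sigma:[0,T]\times\mathbb R^d\times A\to\mathbb R^{d\times 1}$ be continuous with $|\mu(t,x,a)-\mu(s,y,a)|+\|\sigma(t,x,a)-\sigma(s,y,a)\|\leq C_0(|x-y|+|t-s|^{1/2})$ for all $t,s,x,y,a$, for some $C_0\ge0$. Let $h=T/N$, $t_n=nh$. For $a\in A$ define the one-step Euler–Maruyama value $\widetilde X^{t_n,x,a}_{t_{n+1}}=x+\mu(t_n,x,a)h+\sigma(t_n,x,a)(B_{t_{n+1}}-B_{t_n})$, where $B_{t_{n+1}}-B_{t_n}\sim\sqrt h\,\mathcal N(0,1)$. Let $H_M(z)=(-1)^Me^{z^2}\frac{d^M}{dz^M}e^{-z^2}$ be the Hermite polynomial of order $M$, $z_1,\dots,z_M$ its zeros, $\omega_i=\frac{2^{M-1}M!\sqrt\pi}{M^2[H_{M-1}(z_i)]^2}$,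 and $\lambda_i=\omega_i/\sqrt\pi$, $\xi_i=\sqrt2 z_i$ (so $\lambda_i\ge0$, $\sum_i\lambda_i=1$, and $\sum_i\lambda_i f(\xi_i)=\int f(y)e^{-y^2/2}(2\pi)^{-1/2}dy$ for every polynomial $f$ of degree $\le 2M-1$). Let $\zeta$ be a random variable with $\mathbb P(\zeta=\xi_i)=\lambda_i$ and define $\widehat X^{t_n,x,a}_{t_{n+1}}=x+\mu(t_n,x,a)h+\sqrt h\,\sigma(t_n,x,a)\zeta$. For $k\in\mathbb N$, $\|D^{(k)}f\|_\infty:=\sup_{z\in\mathbb R^d,\ \beta\in\mathbb N^d,|\beta|=k}|\partial^\beta f(z)|$. *)

theory Defs
  imports "HOL-Analysis.Analysis" "HOL-Probability.Probability"
begin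

definition partial_dir :: "'d::finite \<Rightarrow> (real^'d \<Rightarrow> real) \<Rightarrow> real^'d \<Rightarrow> real" where
  "partial_dir i g x = deriv (\<lambda>t. g (x + t *\<^sub>R axis i 1)) 0"

text \<open>Iterated partial derivative along a list of coordinate indices
  (a multi-index beta with |beta| = k corresponds to lists of length k).\<close>
fun iter_partial :: "'d::finite list \<Rightarrow> (real^'d \<Rightarrow> real) \<Rightarrow> real^'d \<Rightarrow> real" where
  "iter_partial [] g = g"
| "iter_partial (i # is) g = partial_dir i (iter_partial is g)"

definition Ck :: "nat \<Rightarrow> (real^'d::finite \<Rightarrow> real) \<Rightarrow> bool" where
  "Ck k f \<longleftrightarrow>
     (\<forall>is. length is < k \<longrightarrow> (\<forall>i x. (\<lambda>t. iter_partial is f (x + t *\<^sub>R axis i 1)) differentiable (at 0)))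
   \<and> (\<forall>is. length is \<le> k \<longrightarrow> continuous_on UNIV (iter_partial is f))"

definition Dk_vals :: "nat \<Rightarrow> (real^'d::finite \<Rightarrow> real) \<Rightarrow> real set" where
  "Dk_vals k f = {\<bar>iter_partial is f z\<bar> | is z. length is = k}"

text \<open>\<open>\<parallel>D^(k) f\<parallel>_\<infinity>\<close> (meaningful when Dk_vals k f is bounded).\<close>
definition Dk_sup :: "nat \<Rightarrow> (real^'d::finite \<Rightarrow> real) \<Rightarrow> real" where
  "Dk_sup k f = Sup (Dk_vals k f)"

definition hermite :: "nat \<Rightarrow> real \<Rightarrow> real" where
  "hermite M z = (-1) ^ M * exp (z\<^sup>2) * (deriv ^^ M) (\<lambda>y. exp (- (y\<^sup>2))) z"

definition hermite_zeros :: "nat \<Rightarrow> real set" where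
  "hermite_zeros M = {z. hermite M z = 0}"

definition gh_omega :: "nat \<Rightarrow> real \<Rightarrow> real" where
  "gh_omega M z = 2 ^ (M - 1) * fact M * sqrt pi / ((real M)\<^sup>2 * (hermite (M - 1) z)\<^sup>2)"

definition gh_lambda :: "nat \<Rightarrow> real \<Rightarrow> real" where
  "gh_lambda M z = gh_omega M z / sqrt pi"

text \<open>E[f(X~)] for the one-step Euler--Maruyama value, with B_{t_{n+1}} - B_{t_n} = sqrt h * Y,
  Y standard normal.\<close>
definition EM_expect ::
  "(real \<Rightarrow> real^'d \<Rightarrow> 'a \<Rightarrow> real^'d) \<Rightarrow> (real \<Rightarrow> real^'d \<Rightarrow> 'a \<Rightarrow> real^'d)
   \<Rightarrow> (real^'d::finite \<Rightarrow> real) \<Rightarrow> real \<Rightarrow> real \<Rightarrow> real^'d \<Rightarrow> 'a \<Rightarrow> real" where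
  "EM_expect \<mu> \<sigma> f h t x a =
     (LINT y|lborel. std_normal_density y * f (x + h *\<^sub>R \<mu> t x a + (sqrt h * y) *\<^sub>R \<sigma> t x a))"

text \<open>E[f(X^)] where P(zeta = xi_i) = lambda_i, xi_i = sqrt 2 z_i, z_i the zeros of H_M.\<close>
definition GH_expect ::
  "nat \<Rightarrow> (real \<Rightarrow> real^'d \<Rightarrow> 'a \<Rightarrow> real^'d) \<Rightarrow> (real \<Rightarrow> real^'d \<Rightarrow> 'a \<Rightarrow> real^'d)
   \<Rightarrow> (real^'d::finite \<Rightarrow> real) \<Rightarrow> real \<Rightarrow> real \<Rightarrow> real^'d \<Rightarrow> 'a \<Rightarrow> real" where
  "GH_expect M \<mu> \<sigma> f h t x a =
     (\<Sum>z\<in>hermite_zeros M. gh_lambda M z *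
        f (x + h *\<^sub>R \<mu> t x a + (sqrt h * (sqrt 2 * z)) *\<^sub>R \<sigma> t x a))"

end

theory Submission
  imports Defs "HOL-Computational_Algebra.Polynomial"
begin

fun hp :: "nat \<Rightarrow> real poly" where
  "hp 0 = 1"
| "hp (Suc n) = [:0,2:] * hp n - pderiv (hp n)"

lemma hp_coeff: "coeff (hp n) n = 2^n \<and> (\<forall>k>n. coeff (hp n) k = 0)"
proof (induction n)
  case 0 then show ?case by (auto simp: coeff_1)
next
  case (Suc n)
  have e: "[:0,2:] * hp n = pCons 0 (smult 2 (hp n))" by simp
  show ?case using Suc by (auto simp: hp.simps(2) e coeff_pderiv coeff_pCons split: nat.splits)
qed

lemma degree_hp: "degree (hp n) = n"
  using hp_coeff[of n] by (metis le_degree leading_coeff_0_iff order.antisym power_not_zero zero_neq_numeral degree_le)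

lemma lead_hp: "lead_coeff (hp n) = 2^n"
  using hp_coeff[of n] degree_hp[of n] by simp

lemma hp_nz: "hp n \<noteq> 0"
  using lead_hp[of n] by (metis leading_coeff_0_iff power_not_zero zero_neq_numeral)

declare hp.simps(2)[simp del]

lemma hp_Suc: "hp (Suc n) = [:0,2:] * hp n - pderiv (hp n)"
  by (rule hp.simps(2))

lemma pderiv_hp: "pderiv (hp (Suc n)) = smult (2 * (real n + 1)) (hp n)"
proof (induction n)
  case 0 then show ?case by (simp add: hp_Suc pderiv_pCons)
next
  case (Suc n)
  let ?P = "hp (Suc n)"
  let ?c = "2 * (real n + 1)"
  have 1: "pderiv (hp (Suc (Suc n))) = pderiv ([:0,2:] * ?P) - pderiv (pderiv ?P)"
    by (simp add: hp_Suc[of "Suc n"] pderiv_diff)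
  have 2: "pderiv ([:0,2:] * ?P) = smult 2 ?P + [:0,2:] * pderiv ?P"
    by (simp add: pderiv_mult pderiv_pCons pderiv_smult)
  have 3: "[:0,2:] * pderiv ?P - pderiv (pderiv ?P) = smult ?c ([:0,2:] * hp n - pderiv (hp n))"
    by (simp only: Suc pderiv_smult mult_smult_right smult_diff_right)
  have 4: "[:0,2:] * hp n - pderiv (hp n) = ?P" by (simp add: hp_Suc)
  have "pderiv (hp (Suc (Suc n))) = smult 2 ?P + ([:0,2:] * pderiv ?P - pderiv (pderiv ?P))"
    unfolding 1 2 by (simp add: algebra_simps)
  also have "\<dots> = smult 2 ?P + smult ?c ?P" unfolding 3 4 ..
  also have "\<dots> = smult (2 + ?c) ?P" by (simp only: smult_add_left)
  finally show ?case by (simp add: algebra_simps)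
qed

lemma hp_rec: "hp (Suc (Suc n)) = [:0,2:] * hp (Suc n) - smult (2 * (real n + 1)) (hp n)"
  by (simp only: hp_Suc[of "Suc n"] pderiv_hp)

lemma poly_hp_rec: "poly (hp (Suc (Suc n))) x = 2 * x * poly (hp (Suc n)) x - 2 * (real n + 1) * poly (hp n) x"
  unfolding hp_rec by simp

lemma poly_hp_Suc: "poly (hp (Suc n)) x = 2 * x * poly (hp n) x - poly (pderiv (hp n)) x"
  unfolding hp_Suc by simp

lemma hp_parity: "poly (hp n) (-x) = (-1)^n * poly (hp n) x"
proof -
  have "poly (hp n) (-x) = (-1)^n * poly (hp n) x \<and> poly (hp (Suc n)) (-x) = (-1)^(Suc n) * poly (hp (Suc n)) x"
  proof (induction n)
    case 0 then show ?case by (simp add: hp_Suc)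
  next
    case (Suc n)
    then show ?case by (simp add: poly_hp_rec[of n] algebra_simps)
  qed
  then show ?thesis by simp
qed

lemma hermite_poly: "hermite n z = poly (hp n) z"
proof -
  have "(deriv ^^ n) (\<lambda>y. exp (- (y\<^sup>2))) = (\<lambda>y. (-1)^n * poly (hp n) y * exp (- (y\<^sup>2)))"
  proof (induction n)
    case 0 then show ?case by simp
  next
    case (Suc n)
    have d: "((\<lambda>y. (-1)^n * poly (hp n) y * exp (- (y\<^sup>2))) has_real_derivative
         (-1)^(Suc n) * poly (hp (Suc n)) y * exp (- (y\<^sup>2))) (at y)" for y
      by (auto intro!: derivative_eq_intros simp: poly_hp_Suc algebra_simps power2_eq_square)
    show ?case
      by (simp add: Suc DERIV_imp_deriv[OF d] del: hp.simps)
  qed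
  then show ?thesis unfolding hermite_def
    by (simp add: exp_minus field_simps flip: power_mult_distrib)
qed

definition Wx :: "nat \<Rightarrow> real \<Rightarrow> real" where
  "Wx n x = 2 * (real n + 1) * (poly (hp n) x)\<^sup>2 - 2 * x * poly (hp n) x * poly (hp (Suc n)) x + (poly (hp (Suc n)) x)\<^sup>2"

lemma Wx_step_alg: "C = 2 * x * B - 2 * (k + 1) * A \<Longrightarrow>
  2 * (k + 2) * B\<^sup>2 - 2 * x * B * C + C\<^sup>2 = 2 * (k + 1) * (2 * (k + 1) * A\<^sup>2 - 2 * x * A * B + B\<^sup>2) + 2 * B\<^sup>2"
  for A B C x k :: real
  by (hypsubst, simp add: power2_eq_square algebra_simps)

lemma Wx_pos: "Wx n x > 0"
proof (induction n)
  case 0 then show ?case by (simp add: Wx_def power2_eq_square hp_Suc)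
next
  case (Suc n)
  have "Wx (Suc n) x = 2 * (real n + 1) * Wx n x + 2 * (poly (hp (Suc n)) x)\<^sup>2"
    unfolding Wx_def using Wx_step_alg[OF poly_hp_rec[of n x]] by (simp add: algebra_simps)
  moreover have "2 * (real n + 1) * Wx n x > 0" using Suc by simp
  ultimately show ?case by (simp add: add_pos_nonneg)
qed

lemma cont_poly: "continuous_on UNIV (poly p)" for p :: "real poly"
  using continuous_on_poly[of UNIV "\<lambda>x. x" p] by (simp add: continuous_on_id)

lemma ivt_sign:
  fixes g :: "real \<Rightarrow> real"
  assumes "continuous_on UNIV g" "a < b" "g a * g b < 0"
  shows "\<exists>c. a < c \<and> c < b \<and> g c = 0"
proof -
  have cont: "continuous_on {a..b} g" using assms(1) continuous_on_subset by blast
  have "g a \<noteq> 0" "g b \<noteq> 0" using assms(3) by auto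
  have "\<exists>c. a \<le> c \<and> c \<le> b \<and> g c = 0"
  proof (cases "g a < 0")
    case True
    then have "g b > 0" using assms(3) by (auto simp: mult_less_0_iff)
    then show ?thesis using IVT'[of g a 0 b] True cont assms(2) by auto
  next
    case False
    then have "g a > 0" "g b < 0" using assms(3) \<open>g a \<noteq> 0\<close> by (auto simp: mult_less_0_iff)
    then show ?thesis using IVT2'[of g b 0 a] cont assms(2) by auto
  qed
  then obtain c where "a \<le> c" "c \<le> b" "g c = 0" by blast
  then show ?thesis using \<open>g a \<noteq> 0\<close> \<open>g b \<noteq> 0\<close> by (metis order_le_less)
qed

lemma consec_root:
  fixes g :: "real \<Rightarrow> real"
  assumes cont: "continuous_on UNIV g" and lt: "r1 < r2" and z: "g r1 = 0" "g r2 = 0"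
    and d: "DERIV g r1 :> d1" "DERIV g r2 :> d2" and pos: "d1 > 0" "d2 > 0"
  shows "\<exists>c. r1 < c \<and> c < r2 \<and> g c = 0"
proof -
  obtain e1 where e1: "e1 > 0" "\<And>h. h > 0 \<Longrightarrow> h < e1 \<Longrightarrow> g r1 < g (r1 + h)"
    using DERIV_pos_inc_right[OF d(1) pos(1)] by blast
  obtain e2 where e2: "e2 > 0" "\<And>h. h > 0 \<Longrightarrow> h < e2 \<Longrightarrow> g (r2 - h) < g r2"
    using DERIV_pos_inc_left[OF d(2) pos(2)] by blast
  define \<delta> where "\<delta> = (r2 - r1) / 2"
  define h1 where "h1 = min e1 \<delta> / 2"
  define h2 where "h2 = min e2 \<delta> / 2"
  have "\<delta> > 0" using lt by (simp add: \<delta>_def)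
  have h1: "h1 > 0" "h1 < e1" "h1 < \<delta>" using e1 \<open>\<delta> > 0\<close> by (auto simp: h1_def min_def)
  have h2: "h2 > 0" "h2 < e2" "h2 < \<delta>" using e2 \<open>\<delta> > 0\<close> by (auto simp: h2_def min_def)
  have ga: "g (r1 + h1) > 0" using e1(2)[OF h1(1,2)] z by simp
  have gb: "g (r2 - h2) < 0" using e2(2)[OF h2(1,2)] z by simp
  have ab: "r1 + h1 < r2 - h2" using h1 h2 by (simp add: \<delta>_def)
  obtain c where "r1 + h1 < c" "c < r2 - h2" "g c = 0"
    using ivt_sign[OF cont ab] ga gb by (auto simp: mult_pos_neg)
  then show ?thesis using h1 h2 by (intro exI[of _ c]) auto
qed

lemma consec_root_poly:
  fixes p :: "real poly"
  assumes lt: "r1 < r2" and z: "poly p r1 = 0" "poly p r2 = 0"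
    and a: "poly (pderiv p) r1 > 0" "poly (pderiv p) r2 > 0"
  shows "\<exists>c. r1 < c \<and> c < r2 \<and> poly p c = 0"
  by (rule consec_root[of "poly p" r1 r2 "poly (pderiv p) r1" "poly (pderiv p) r2"])
     (use a lt z cont_poly[of p] poly_DERIV[of p] in auto)

lemma sign_consec:
  fixes p :: "real poly"
  assumes lt: "r1 < r2" and z: "poly p r1 = 0" "poly p r2 = 0"
    and nb: "\<forall>z. r1 < z \<and> z < r2 \<longrightarrow> poly p z \<noteq> 0"
    and nz: "poly (pderiv p) r1 \<noteq> 0" "poly (pderiv p) r2 \<noteq> 0"
  shows "poly (pderiv p) r1 * poly (pderiv p) r2 < 0"
proof (rule ccontr)
  assume "\<not> ?thesis"
  then have "(poly (pderiv p) r1 > 0 \<and> poly (pderiv p) r2 > 0) \<or> (poly (pderiv p) r1 < 0 \<and> poly (pderiv p) r2 < 0)"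
    using nz by (smt (verit) mult_pos_neg mult_neg_pos)
  then show False
  proof
    assume a: "poly (pderiv p) r1 > 0 \<and> poly (pderiv p) r2 > 0"
    then show False using consec_root_poly[OF lt z] nb by auto
  next
    assume a: "poly (pderiv p) r1 < 0 \<and> poly (pderiv p) r2 < 0"
    have "\<exists>c. r1 < c \<and> c < r2 \<and> poly (-p) c = 0"
      by (rule consec_root_poly) (use a lt z in \<open>auto simp: pderiv_minus\<close>)
    then show False using nb by auto
  qed
qed

lemma max_root_pos:
  fixes p :: "real poly"
  assumes lc: "lead_coeff p > 0" and z: "poly p r = 0"
    and nb: "\<forall>y>r. poly p y \<noteq> 0" and nz: "poly (pderiv p) r \<noteq> 0"
  shows "poly (pderiv p) r > 0"
proof (rule ccontr)
  assume "\<not> ?thesis"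
  then have neg: "poly (pderiv p) r < 0" using nz by simp
  obtain d where d: "d > 0" "\<And>h. h > 0 \<Longrightarrow> h < d \<Longrightarrow> poly p r > poly p (r + h)"
    using DERIV_neg_dec_right[OF poly_DERIV neg] by blast
  obtain N where N: "\<And>x. x \<ge> N \<Longrightarrow> poly p x \<ge> lead_coeff p"
    using poly_pinfty_gt_lc[OF lc] by blast
  define a where "a = r + d / 2"
  define b where "b = max N (a + 1)"
  have ga: "poly p a < 0" using d(2)[of "d/2"] d(1) z by (simp add: a_def)
  have gb: "poly p b > 0" using N[of b] lc by (simp add: b_def)
  have ab: "a < b" by (simp add: b_def)
  obtain c where "a < c" "c < b" "poly p c = 0"
    using ivt_sign[of "poly p" a b] ab ga gb cont_poly[of p] by (auto simp: mult_neg_pos)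
  moreover have "c > r" using \<open>a < c\<close> d(1) by (simp add: a_def)
  ultimately show False using nb by auto
qed

definition alt_cond :: "(real \<Rightarrow> real) \<Rightarrow> real set \<Rightarrow> bool" where
  "alt_cond g X \<longleftrightarrow> (\<forall>x\<in>X. \<forall>y\<in>X. x < y \<and> (\<forall>z\<in>X. \<not> (x < z \<and> z < y)) \<longrightarrow> g x * g y < 0)"

lemma alt_roots_aux:
  fixes g :: "real \<Rightarrow> real"
  assumes cont: "continuous_on UNIV g" and fin: "finite X"
  shows "X \<noteq> {} \<longrightarrow> alt_cond g X \<longrightarrow> (\<exists>R. finite R \<and> card R = card X - 1 \<and> (\<forall>r\<in>R. g r = 0 \<and> r < Max X))"
  using fin
proof (induction X rule: finite_ranking_induct[where f = "\<lambda>x. x"])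
  case empty then show ?case by simp
next
  case (insert x S)
  show ?case
  proof (intro impI)
    assume ne: "insert x S \<noteq> {}" and ac: "alt_cond g (insert x S)"
    show "\<exists>R. finite R \<and> card R = card (insert x S) - 1 \<and> (\<forall>r\<in>R. g r = 0 \<and> r < Max (insert x S))"
    proof (cases "x \<in> S")
      case True
      then have "insert x S = S" by blast
      then show ?thesis using insert.IH ne ac by simp
    next
      case xS: False
      show ?thesis
      proof (cases "S = {}")
        case True then show ?thesis by (intro exI[of _ "{}"]) simp
      next
        case Sne: False
        have acS: "alt_cond g S"
          unfolding alt_cond_def
        proof (intro ballI impI)
          fix a b assume ab: "a \<in> S" "b \<in> S" "a < b \<and> (\<forall>z\<in>S. \<not> (a < z \<and> z < b))"
          have "\<forall>z\<in>insert x S. \<not> (a < z \<and> z < b)" using ab insert.hyps(2)[of b] by auto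
          then show "g a * g b < 0" using ac ab unfolding alt_cond_def by auto
        qed
        obtain R where R: "finite R" "card R = card S - 1" "\<forall>r\<in>R. g r = 0 \<and> r < Max S"
          using insert.IH Sne acS by blast
        define m where "m = Max S"
        have mS: "m \<in> S" using Sne insert.hyps(1) by (simp add: m_def)
        have mx: "m < x" using insert.hyps(2)[OF mS] mS xS by (metis order_le_less)
        have cons: "\<forall>z\<in>insert x S. \<not> (m < z \<and> z < x)"
          using Max_ge[OF insert.hyps(1)] by (force simp: m_def)
        have "g m * g x < 0" using ac mS mx cons unfolding alt_cond_def by blast
        then obtain c where c: "m < c" "c < x" "g c = 0" using ivt_sign[OF cont mx] by blast
        have cR: "c \<notin> R" using R(3) c(1) by (auto simp: m_def)
        have Mx: "Max (insert x S) = x"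
          using Max_insert[OF insert.hyps(1) Sne, of x] mx by (simp add: m_def)
        show ?thesis
        proof (intro exI[of _ "insert c R"] conjI)
          show "finite (insert c R)" using R by simp
          show "card (insert c R) = card (insert x S) - 1"
            using R cR xS insert.hyps(1) Sne by (simp add: card_gt_0_iff Suc_diff_1)
          show "\<forall>r\<in>insert c R. g r = 0 \<and> r < Max (insert x S)"
            using R(3) c mx by (auto simp: Mx m_def)
        qed
      qed
    qed
  qed
qed

lemma alt_roots:
  fixes g :: "real \<Rightarrow> real"
  assumes cont: "continuous_on UNIV g" and fin: "finite X" and ne: "X \<noteq> {}" and ac: "alt_cond g X"
    and finZ: "finite {x. g x = 0}"
  shows "card {x. g x = 0} \<ge> card X - 1"
proof -
  obtain R where R: "finite R" "card R = card X - 1" "\<forall>r\<in>R. g r = 0"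
    using alt_roots_aux[OF cont fin] ne ac by blast
  have "R \<subseteq> {x. g x = 0}" using R(3) by auto
  from card_mono[OF finZ this] R(2) show ?thesis by simp
qed

abbreviation "HR n \<equiv> {x. poly (hp n) x = 0}"

lemma HR_finite: "finite (HR n)"
  using poly_roots_finite[OF hp_nz] .

lemma HR_card_le: "card (HR n) \<le> n"
  using card_poly_roots_bound[OF hp_nz, of n] degree_hp by simp

lemma HR_sym: "r \<in> HR n \<Longrightarrow> -r \<in> HR n"
  using hp_parity[of n r] by simp

lemma hp_root_prev_nz:
  assumes "poly (hp (Suc n)) r = 0"
  shows "poly (hp n) r \<noteq> 0"
proof
  assume "poly (hp n) r = 0"
  then have "Wx n r = 0" using assms by (simp add: Wx_def)
  then show False using Wx_pos[of n r] by simp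
qed

lemma HR_card: "card (HR (Suc n)) = Suc n"
proof (induction n)
  case 0
  have "HR (Suc 0) = {0}" by (auto simp: hp_Suc)
  then show ?case by simp
next
  case (Suc n)
  let ?P = "hp (Suc n)" and ?Q = "hp (Suc (Suc n))"
  define R where "R = HR (Suc n)"
  have finR: "finite R" using HR_finite by (simp add: R_def)
  have cardR: "card R = Suc n" using Suc by (simp add: R_def)
  have Rne: "R \<noteq> {}" using cardR by auto
  have dP: "poly (pderiv ?P) r = 2 * (real n + 1) * poly (hp n) r" for r
    by (simp add: pderiv_hp)
  have Qr: "poly ?Q r = - 2 * (real n + 1) * poly (hp n) r" if "r \<in> R" for r
    using that poly_hp_rec[of n r] by (simp add: R_def algebra_simps)
  have hn: "poly (hp n) r \<noteq> 0" if "r \<in> R" for r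
    using that hp_root_prev_nz by (simp add: R_def)
  have consR: "poly ?Q r1 * poly ?Q r2 < 0"
    if "r1 \<in> R" "r2 \<in> R" "r1 < r2" "\<forall>z\<in>R. \<not> (r1 < z \<and> z < r2)" for r1 r2
  proof -
    have "poly (pderiv ?P) r1 * poly (pderiv ?P) r2 < 0"
      by (rule sign_consec) (use that hn in \<open>auto simp: R_def dP\<close>)
    then have "poly (hp n) r1 * poly (hp n) r2 < 0"
      unfolding dP by (simp add: mult_less_0_iff zero_less_mult_iff; smt (verit) of_nat_0_le_iff)
    then show ?thesis using that(1,2) Qr
      by (simp add: mult_less_0_iff zero_less_mult_iff; smt (verit) of_nat_0_le_iff)
  qed
  define rM where "rM = Max R"
  have rM: "rM \<in> R" "\<And>r. r \<in> R \<Longrightarrow> r \<le> rM" using finR Rne by (auto simp: rM_def)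
  have "poly (pderiv ?P) rM > 0"
  proof (rule max_root_pos)
    show "lead_coeff ?P > 0" by (simp add: lead_hp)
    show "poly ?P rM = 0" using rM by (simp add: R_def)
    show "\<forall>y>rM. poly ?P y \<noteq> 0" using rM(2) by (force simp: R_def)
    show "poly (pderiv ?P) rM \<noteq> 0" using hn[OF rM(1)] by (simp add: dP)
  qed
  then have "poly (hp n) rM > 0" unfolding dP by (simp add: zero_less_mult_iff; smt (verit) of_nat_0_le_iff)
  then have QrM: "poly ?Q rM < 0" using Qr[OF rM(1)] by (simp add: mult_less_0_iff; smt (verit) of_nat_0_le_iff)
  have Rsym: "r \<in> R \<Longrightarrow> -r \<in> R" for r using HR_sym by (simp add: R_def)
  define rm where "rm = Min R"
  have rm: "rm \<in> R" "\<And>r. r \<in> R \<Longrightarrow> rm \<le> r" using finR Rne by (auto simp: rm_def)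
  have rm_eq: "rm = - rM"
    using rm rM Rsym by (smt (verit))
  obtain N where N: "\<And>x. x \<ge> N \<Longrightarrow> poly ?Q x \<ge> lead_coeff ?Q"
    using poly_pinfty_gt_lc[of ?Q] by (auto simp: lead_hp)
  define B where "B = max N (\<bar>rM\<bar> + 1)"
  have QB: "poly ?Q B > 0" using N[of B] by (simp add: B_def lead_hp) (smt (verit) zero_less_power)
  have RB: "r < B" "-B < r" if "r \<in> R" for r
    using rM(2)[OF that] rm(2)[OF that] rm_eq by (auto simp: B_def)
  have par: "poly ?Q (-x) = (-1)^n * poly ?Q x" for x
    using hp_parity[of "Suc (Suc n)" x] by simp
  have m1: "(-1::real)^n * (-1)^n = 1" by (simp flip: power_mult_distrib)
  define X where "X = insert (-B) (insert B R)"
  have Bnot: "B \<notin> R" "-B \<notin> R" using RB by force+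
  have mBB: "-B \<noteq> B" using RB[OF rM(1)] by auto
  have cardX: "card X = Suc (Suc (Suc n))"
    using Bnot mBB finR cardR by (simp add: X_def)
  have acX: "alt_cond (poly ?Q) X"
    unfolding alt_cond_def
  proof (intro ballI impI)
    fix x y assume xX: "x \<in> X" and yX: "y \<in> X" and c: "x < y \<and> (\<forall>z\<in>X. \<not> (x < z \<and> z < y))"
    have Rx: "\<forall>z\<in>R. \<not> (x < z \<and> z < y)" using c by (auto simp: X_def)
    consider "x \<in> R" "y \<in> R" | "x = -B" | "x = B" | "x \<in> R" "y = B" | "x \<in> R" "y = -B"
      using xX yX by (auto simp: X_def)
    then show "poly ?Q x * poly ?Q y < 0"
    proof cases
      case 1 then show ?thesis using consR c Rx by blast
    next
      case 2
      then have "y \<noteq> -B" using c by auto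
      have "y \<in> R"
      proof (rule ccontr)
        assume "y \<notin> R" then have "y = B" using yX \<open>y \<noteq> -B\<close> by (auto simp: X_def)
        then show False using Rx RB[OF rm(1)] rm(1) 2 by auto
      qed
      then have "y = rm" using Rx rm RB[OF rm(1)] 2 by (metis order_le_less)
      then have "poly ?Q x * poly ?Q y = ((-1)^n * (-1)^n) * (poly ?Q B * poly ?Q rM)"
        using 2 par[of B] par[of rM] rm_eq by (simp add: algebra_simps)
      then show ?thesis using m1 QB QrM by (simp add: mult_pos_neg)
    next
      case 3
      have "y \<le> B" using yX RB[of y] RB[OF rM(1)] by (auto simp: X_def)
      then show ?thesis using 3 c by auto
    next
      case 4
      then have "x = rM" using Rx rM RB[OF rM(1)] by (metis order_le_less)
      then show ?thesis using 4 QB QrM by (simp add: mult_neg_pos)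
    next
      case 5 then show ?thesis using c RB[of x] by auto
    qed
  qed
  have finX: "finite X" using finR by (simp add: X_def)
  have "card (HR (Suc (Suc n))) \<ge> card X - 1"
    by (rule alt_roots[OF cont_poly finX _ acX HR_finite]) (simp add: X_def)
  then show ?case using HR_card_le[of "Suc (Suc n)"] cardX by simp
qed

fun mom :: "nat \<Rightarrow> real" where
  "mom 0 = 1"
| "mom (Suc 0) = 0"
| "mom (Suc (Suc k)) = (real k + 1) / 2 * mom k"

lemma mom_rec: "2 * mom (Suc j) = real j * mom (j - 1)"
  by (cases j) auto

definition Lf :: "real poly \<Rightarrow> real" where
  "Lf p = (\<Sum>i\<le>degree p. coeff p i * mom i)"

lemma Lf_le: "degree p \<le> n \<Longrightarrow> Lf p = (\<Sum>i\<le>n. coeff p i * mom i)"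
  unfolding Lf_def
  by (rule sum.mono_neutral_left) (auto simp: coeff_eq_0)

lemma Lf_add: "Lf (p + q) = Lf p + Lf q"
proof -
  let ?n = "max (degree p) (degree q)"
  have "Lf (p + q) = (\<Sum>i\<le>?n. coeff (p + q) i * mom i)"
    by (rule Lf_le) (simp add: degree_add_le)
  also have "\<dots> = (\<Sum>i\<le>?n. coeff p i * mom i) + (\<Sum>i\<le>?n. coeff q i * mom i)"
    by (simp add: algebra_simps sum.distrib)
  also have "\<dots> = Lf p + Lf q" using Lf_le[of p ?n] Lf_le[of q ?n] by simp
  finally show ?thesis .
qed

lemma Lf_smult: "Lf (smult c p) = c * Lf p"
proof -
  have "Lf (smult c p) = (\<Sum>i\<le>degree p. coeff (smult c p) i * mom i)"
    by (rule Lf_le) (simp add: degree_smult_le)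
  then show ?thesis by (simp add: Lf_def sum_distrib_left algebra_simps)
qed

lemma Lf_zero [simp]: "Lf 0 = 0" by (simp add: Lf_def)

lemma Lf_minus: "Lf (- p) = - Lf p"
  using Lf_smult[of "-1" p] by simp

lemma Lf_diff: "Lf (p - q) = Lf p - Lf q"
  using Lf_add[of p "-q"] Lf_minus[of q] by simp

lemma Lf_sum: "Lf (\<Sum>x\<in>S. f x) = (\<Sum>x\<in>S. Lf (f x))"
  by (induction S rule: infinite_finite_induct) (auto simp: Lf_add)

lemma Lf_const: "Lf [:c:] = c" by (simp add: Lf_def)

lemma Lf_monom: "Lf (monom 1 k) = mom k"
proof -
  have "Lf (monom 1 k) = (\<Sum>i\<le>k. if k = i then mom i else 0)"
    unfolding Lf_def degree_monom_eq[OF one_neq_zero] by (rule sum.cong) auto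
  then show ?thesis by simp
qed

lemma Lf_pderiv: "Lf (pderiv p) = Lf ([:0,2:] * p)"
proof -
  define n where "n = degree p"
  have cz: "coeff p i = 0" if "i > n" for i using that by (simp add: n_def coeff_eq_0)
  have e: "[:0,2:] * p = pCons 0 (smult 2 p)" by simp
  have "Lf ([:0,2:] * p) = (\<Sum>i\<le>Suc n. coeff (pCons 0 (smult 2 p)) i * mom i)"
    unfolding e by (rule Lf_le) (simp add: n_def degree_smult_le)
  also have "\<dots> = (\<Sum>i\<le>n. 2 * coeff p i * mom (Suc i))"
    by (subst sum.atMost_Suc_shift) simp
  also have "\<dots> = (\<Sum>i\<le>n. coeff p i * (real i * mom (i - 1)))"
    by (intro sum.cong refl) (metis mom_rec mult.assoc mult.left_commute)
  also have "\<dots> = (\<Sum>i\<le>Suc n. coeff p i * (real i * mom (i - 1)))"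
    using cz[of "Suc n"] by simp
  also have "\<dots> = (\<Sum>i\<le>n. coeff p (Suc i) * (real (Suc i) * mom i))"
    by (subst sum.atMost_Suc_shift) simp
  finally have 1: "Lf ([:0,2:] * p) = (\<Sum>i\<le>n. coeff p (Suc i) * (real (Suc i) * mom i))" .
  have "Lf (pderiv p) = (\<Sum>i\<le>n. coeff (pderiv p) i * mom i)"
    by (rule Lf_le) (simp add: n_def degree_pderiv)
  also have "\<dots> = (\<Sum>i\<le>n. coeff p (Suc i) * (real (Suc i) * mom i))"
    by (simp add: coeff_pderiv algebra_simps)
  finally show ?thesis using 1 by simp
qed

lemma pderiv_iter_Suc: "(pderiv ^^ Suc n) q = (pderiv ^^ n) (pderiv q)"
  by (simp add: funpow_Suc_right del: funpow.simps)

lemma pderiv_iter_zero: "degree q < n \<Longrightarrow> (pderiv ^^ n) q = 0" for q :: "real poly"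
proof (induction n arbitrary: q)
  case 0 then show ?case by simp
next
  case (Suc n)
  show ?case
  proof (cases n)
    case 0
    then have "degree q = 0" using Suc.prems by simp
    then show ?thesis using 0 pderiv_eq_0_iff[of q] by simp
  next
    case (Suc k)
    have "degree (pderiv q) < n" using Suc.prems \<open>n = Suc k\<close> by (simp add: degree_pderiv)
    then show ?thesis using Suc.IH by (simp only: pderiv_iter_Suc)
  qed
qed

lemma pderiv_iter_top: "degree q = n \<Longrightarrow> (pderiv ^^ n) q = [:fact n * lead_coeff q:]" for q :: "real poly"
proof (induction n arbitrary: q)
  case 0 then show ?case using degree_0_id[of q] by simp
next
  case (Suc n)
  have d: "degree (pderiv q) = n" using Suc.prems by (simp add: degree_pderiv)
  have l: "lead_coeff (pderiv q) = real (Suc n) * lead_coeff q"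
    using Suc.prems d by (simp add: coeff_pderiv)
  show ?case using Suc.IH[OF d] l by (simp only: pderiv_iter_Suc) (simp add: algebra_simps)
qed

lemma Lf_hp_step: "Lf (hp (Suc n) * q) = Lf (hp n * pderiv q)"
proof -
  have "hp (Suc n) * q = [:0,2:] * (hp n * q) - pderiv (hp n) * q"
    by (simp add: hp_Suc algebra_simps)
  then have "Lf (hp (Suc n) * q) = Lf (pderiv (hp n * q)) - Lf (pderiv (hp n) * q)"
    by (simp add: Lf_diff Lf_pderiv mult.assoc)
  also have "\<dots> = Lf (hp n * pderiv q)"
    by (simp add: pderiv_mult Lf_add algebra_simps)
  finally show ?thesis .
qed

lemma Lf_hp_mult: "Lf (hp n * q) = Lf ((pderiv ^^ n) q)"
proof (induction n arbitrary: q)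
  case 0 then show ?case by simp
next
  case (Suc n)
  show ?case using Suc.IH[of "pderiv q"] by (simp only: Lf_hp_step pderiv_iter_Suc)
qed

lemma Lf_ortho: "degree q < n \<Longrightarrow> Lf (hp n * q) = 0"
  by (simp add: Lf_hp_mult pderiv_iter_zero)

lemma Lf_top: "degree q = n \<Longrightarrow> Lf (hp n * q) = fact n * lead_coeff q"
  by (simp add: Lf_hp_mult pderiv_iter_top Lf_const)

definition wq :: "nat \<Rightarrow> real \<Rightarrow> real" where
  "wq m z = 2^m * fact m / ((real m + 1) * (poly (hp m) z)\<^sup>2)"

definition Qz :: "nat \<Rightarrow> real \<Rightarrow> real poly" where
  "Qz m z = hp (Suc m) div [:-z, 1:]"

lemma Qz_fact:
  assumes "z \<in> HR (Suc m)"
  shows "hp (Suc m) = [:-z, 1:] * Qz m z"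
proof -
  have "[:-z, 1:] dvd hp (Suc m)" using assms poly_eq_0_iff_dvd by blast
  then show ?thesis unfolding Qz_def by (metis dvd_mult_div_cancel)
qed

lemma Qz_nz: "z \<in> HR (Suc m) \<Longrightarrow> Qz m z \<noteq> 0"
  using Qz_fact[of z m] hp_nz[of "Suc m"] by auto

lemma Qz_degree: "z \<in> HR (Suc m) \<Longrightarrow> degree (Qz m z) = m"
proof -
  assume z: "z \<in> HR (Suc m)"
  have "Suc m = degree ([:-z, 1:] * Qz m z)" by (simp only: Qz_fact[OF z, symmetric] degree_hp)
  also have "\<dots> = degree [:-z, 1:] + degree (Qz m z)"
    by (rule degree_mult_eq) (use Qz_nz[OF z] in simp_all)
  finally show ?thesis by simp
qed

lemma Qz_lead: "z \<in> HR (Suc m) \<Longrightarrow> lead_coeff (Qz m z) = 2^Suc m"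
  using Qz_fact[of z m] lead_hp[of "Suc m"] lead_coeff_mult[of "[:-z,1:]" "Qz m z"] by simp

lemma Qz_at_z: "z \<in> HR (Suc m) \<Longrightarrow> poly (Qz m z) z = 2 * (real m + 1) * poly (hp m) z"
proof -
  assume z: "z \<in> HR (Suc m)"
  have "pderiv (hp (Suc m)) = [:-z, 1:] * pderiv (Qz m z) + Qz m z * pderiv [:-z, 1:]"
    using Qz_fact[OF z] pderiv_mult by metis
  then have "poly (pderiv (hp (Suc m))) z = poly (Qz m z) z"
    by (simp add: pderiv_pCons)
  then show ?thesis by (simp add: pderiv_hp)
qed

lemma Qz_at_other: "z \<in> HR (Suc m) \<Longrightarrow> z' \<in> HR (Suc m) \<Longrightarrow> z' \<noteq> z \<Longrightarrow> poly (Qz m z) z' = 0"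
proof -
  assume z: "z \<in> HR (Suc m)" and z': "z' \<in> HR (Suc m)" and ne: "z' \<noteq> z"
  have "0 = poly (hp (Suc m)) z'" using z' by simp
  also have "\<dots> = (z' - z) * poly (Qz m z) z'" by (subst Qz_fact[OF z]) (simp add: algebra_simps)
  finally show ?thesis using ne by simp
qed

lemma Lf_Qz:
  assumes z: "z \<in> HR (Suc m)"
  shows "Lf (Qz m z) = 2^Suc m * fact m / poly (hp m) z"
proof -
  define c where "c = poly (hp m) z"
  have cnz: "c \<noteq> 0" using hp_root_prev_nz z by (simp add: c_def)
  define D where "D = (hp m - [:c:]) div [:-z, 1:]"
  have "poly (hp m - [:c:]) z = 0" by (simp add: c_def)
  then have "[:-z, 1:] dvd (hp m - [:c:])" using poly_eq_0_iff_dvd by blast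
  then have hD: "hp m - [:c:] = [:-z, 1:] * D" unfolding D_def by (metis dvd_mult_div_cancel)
  have degD: "degree D < Suc m"
  proof (cases "D = 0")
    case True then show ?thesis by simp
  next
    case False
    have "degree ([:-z, 1:] * D) = Suc (degree D)" using False by (subst degree_mult_eq) auto
    moreover have "degree (hp m - [:c:]) \<le> m" by (rule degree_diff_le) (simp_all add: degree_hp)
    ultimately show ?thesis using hD by simp
  qed
  have h1: "hp m = [:-z, 1:] * D + [:c:]" by (metis hD diff_add_cancel)
  have "hp m * Qz m z = ([:-z, 1:] * D + [:c:]) * Qz m z" by (subst h1) (rule refl)
  also have "\<dots> = D * ([:-z, 1:] * Qz m z) + [:c:] * Qz m z" by (simp only: distrib_left distrib_right ac_simps)
  also have "\<dots> = hp (Suc m) * D + smult c (Qz m z)" by (simp only: Qz_fact[OF z, symmetric] mult.commute[of D]) simp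
  finally have eq: "hp m * Qz m z = hp (Suc m) * D + smult c (Qz m z)" .
  have "Lf (hp m * Qz m z) = fact m * 2^Suc m"
    using Lf_top[OF Qz_degree[OF z]] Qz_lead[OF z] by simp
  moreover have "Lf (hp m * Qz m z) = c * Lf (Qz m z)"
    unfolding eq by (simp add: Lf_add Lf_smult Lf_ortho[OF degD])
  ultimately have e: "Lf (Qz m z) * c = 2^Suc m * fact m" by (simp add: mult.commute)
  then have "Lf (Qz m z) = 2^Suc m * fact m / c" using cnz by (simp add: eq_divide_eq)
  then show ?thesis by (simp only: c_def)
qed

lemma arith1:
  fixes a H k f :: real
  assumes "H \<noteq> 0" "k \<ge> 0"
  shows "a / (2 * (k + 1) * H) * (2 ^ Suc m * f / H) = a * (2 ^ m * f / ((k + 1) * H\<^sup>2))"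
proof -
  have k: "k + 1 \<noteq> 0" using assms(2) by simp
  have "a / (2 * (k + 1) * H) * (2 ^ Suc m * f / H) = (2 * (a * 2 ^ m * f)) / (2 * ((k + 1) * H\<^sup>2))"
    by (simp add: power2_eq_square mult_ac)
  also have "\<dots> = a * 2 ^ m * f / ((k + 1) * H\<^sup>2)"
    by (rule mult_divide_mult_cancel_left) simp
  finally show ?thesis by simp
qed

lemma quad_low:
  assumes r: "degree r \<le> m"
  shows "Lf r = (\<Sum>z\<in>HR (Suc m). poly r z * wq m z)"
proof -
  let ?S = "HR (Suc m)"
  have finS: "finite ?S" by (rule HR_finite)
  have cardS: "card ?S = Suc m" by (rule HR_card)
  define e where "e = r - (\<Sum>z\<in>?S. smult (poly r z / poly (Qz m z) z) (Qz m z))"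
  have dsm: "degree (smult (poly r z / poly (Qz m z) z) (Qz m z)) \<le> m" if z: "z \<in> ?S" for z
  proof -
    have "degree (smult (poly r z / poly (Qz m z) z) (Qz m z)) \<le> degree (Qz m z)" by (rule degree_smult_le)
    then show ?thesis using Qz_degree[OF z] by simp
  qed
  have dege: "degree e \<le> m"
    unfolding e_def
    by (rule degree_diff_le[OF r degree_sum_le[OF finS dsm]])
  have ez: "poly e z' = 0" if z': "z' \<in> ?S" for z'
  proof -
    have "(\<Sum>z\<in>?S. poly r z / poly (Qz m z) z * poly (Qz m z) z') =
          poly r z' / poly (Qz m z') z' * poly (Qz m z') z'"
      using sum.remove[OF finS z', of "\<lambda>z. poly r z / poly (Qz m z) z * poly (Qz m z) z'"]
        Qz_at_other[OF _ z'] by (simp add: sum.neutral)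
    also have "\<dots> = poly r z'"
      using Qz_at_z[OF z'] hp_root_prev_nz[of m z'] z' by simp
    finally show ?thesis by (simp add: e_def poly_sum)
  qed
  have e0: "e = 0"
  proof (rule ccontr)
    assume "e \<noteq> 0"
    then have "card {x. poly e x = 0} \<le> m" using card_poly_roots_bound[of e] dege by simp
    moreover have "?S \<subseteq> {x. poly e x = 0}" using ez by auto
    moreover have "finite {x. poly e x = 0}" using poly_roots_finite[OF \<open>e \<noteq> 0\<close>] .
    ultimately show False using card_mono[of "{x. poly e x = 0}" ?S] cardS by simp
  qed
  then have "r = (\<Sum>z\<in>?S. smult (poly r z / poly (Qz m z) z) (Qz m z))" by (simp add: e_def)
  then have "Lf r = Lf (\<Sum>z\<in>?S. smult (poly r z / poly (Qz m z) z) (Qz m z))"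
    by (rule arg_cong)
  also have "\<dots> = (\<Sum>z\<in>?S. poly r z / poly (Qz m z) z * Lf (Qz m z))"
    by (simp only: Lf_sum Lf_smult)
  also have "\<dots> = (\<Sum>z\<in>?S. poly r z * wq m z)"
  proof (rule sum.cong[OF refl])
    fix z assume z: "z \<in> ?S"
    have "poly (hp m) z \<noteq> 0" using hp_root_prev_nz z by simp
    then show "poly r z / poly (Qz m z) z * Lf (Qz m z) = poly r z * wq m z"
      unfolding Lf_Qz[OF z] Qz_at_z[OF z] wq_def
      by (rule arith1) simp_all
  qed
  finally show ?thesis .
qed

lemma quad:
  assumes p: "degree p < 2 * Suc m"
  shows "Lf p = (\<Sum>z\<in>HR (Suc m). poly p z * wq m z)"
proof -
  let ?H = "hp (Suc m)"
  define q where "q = p div ?H"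
  define r where "r = p mod ?H"
  have pqr: "p = q * ?H + r" by (simp add: q_def r_def)
  have degr: "degree r \<le> m"
    using degree_mod_less[OF hp_nz, of p "Suc m"] by (auto simp: r_def degree_hp)
  have degq: "degree q < Suc m"
  proof (cases "q = 0")
    case True then show ?thesis by simp
  next
    case False
    have dqH: "degree (q * ?H) = degree q + Suc m" using False hp_nz by (simp add: degree_mult_eq degree_hp)
    then have "degree p = degree q + Suc m" using degr pqr by (simp add: degree_add_eq_left)
    then show ?thesis using p by simp
  qed
  have "Lf p = Lf (?H * q) + Lf r" using pqr by (simp add: Lf_add mult.commute)
  also have "Lf (?H * q) = 0" by (rule Lf_ortho[OF degq])
  also have "Lf r = (\<Sum>z\<in>HR (Suc m). poly r z * wq m z)" by (rule quad_low[OF degr])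
  also have "\<dots> = (\<Sum>z\<in>HR (Suc m). poly p z * wq m z)"
    by (rule sum.cong[OF refl]) (simp add: pqr)
  finally show ?thesis by simp
qed

lemma quad_monom:
  assumes "k < 2 * Suc m"
  shows "(\<Sum>z\<in>HR (Suc m). wq m z * z ^ k) = mom k"
  using quad[of "monom 1 k" m] assms
  by (simp add: Lf_monom degree_monom_eq poly_monom mult.commute)

lemma mom_even_mult: "mom (2 * j) * (2^j * fact j * 2^j) = fact (2 * j)"
proof (induction j)
  case 0 then show ?case by simp
next
  case (Suc j)
  have e: "2 * Suc j = Suc (Suc (2 * j))" by simp
  have f: "fact (Suc (Suc (2 * j))) = (real (2 * j) + 2) * (real (2 * j) + 1) * fact (2 * j)"
    by (simp add: algebra_simps)
  have "mom (2 * Suc j) * (2^Suc j * fact (Suc j) * 2^Suc j)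
      = (real (2 * j) + 2) * (real (2 * j) + 1) * (mom (2 * j) * (2^j * fact j * 2^j))"
    unfolding e mom.simps by (simp add: field_simps)
  then show ?case unfolding Suc e f by simp
qed

lemma mom_even: "mom (2 * j) = fact (2 * j) / (2^j * fact j) / 2^j"
proof -
  have "(2::real)^j * fact j * 2^j \<noteq> 0" by simp
  then show ?thesis using mom_even_mult[of j] by (simp add: field_simps)
qed

lemma mom_odd: "mom (2 * j + 1) = 0"
  by (induction j) auto

lemma normal_mom: "has_bochner_integral lborel (\<lambda>y. std_normal_density y * y ^ k) (sqrt 2 ^ k * mom k)"
proof (cases "even k")
  case True
  then obtain j where k: "k = 2 * j" by (auto elim: evenE)
  have s: "sqrt 2 ^ (2 * j) = (2::real) ^ j" by (simp add: power_mult)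
  show ?thesis using std_normal_moment_even[of j] unfolding k s mom_even by simp
next
  case False
  then obtain j where k: "k = 2 * j + 1" by (auto elim: oddE)
  show ?thesis using std_normal_moment_odd[of j] unfolding k mom_odd by simp
qed

definition PI :: "'d::finite set \<Rightarrow> real^'d \<Rightarrow> real^'d" where
  "PI I v = (\<Sum>i\<in>I. v$i *\<^sub>R axis i 1)"

lemma axis_deriv_any:
  fixes F :: "real^'d::finite \<Rightarrow> real"
  assumes ax: "\<And>x. ((\<lambda>t. F (x + t *\<^sub>R axis i 1)) has_real_derivative D x) (at 0)"
  shows "((\<lambda>\<tau>. F (w + \<tau> *\<^sub>R axis i 1)) has_real_derivative D (w + \<tau>0 *\<^sub>R axis i 1)) (at \<tau>0)"
proof -
  have "((\<lambda>t. F ((w + \<tau>0 *\<^sub>R axis i 1) + t *\<^sub>R axis i 1)) has_real_derivative D (w + \<tau>0 *\<^sub>R axis i 1)) (at 0)"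
    by (rule ax)
  then have "((\<lambda>t. F (w + (t + \<tau>0) *\<^sub>R axis i 1)) has_real_derivative D (w + \<tau>0 *\<^sub>R axis i 1)) (at 0)"
    by (simp add: algebra_simps scaleR_add_left)
  then show ?thesis using DERIV_shift[of "\<lambda>\<tau>. F (w + \<tau> *\<^sub>R axis i 1)" "D (w + \<tau>0 *\<^sub>R axis i 1)" 0 \<tau>0]
    by simp
qed

lemma mvt_part:
  fixes F :: "real^'d::finite \<Rightarrow> real"
  assumes ax: "\<And>x. ((\<lambda>t. F (x + t *\<^sub>R axis j 1)) has_real_derivative Dj x) (at 0)"
    and cont: "continuous_on UNIV Dj"
  shows "((\<lambda>y. (F (q + y *\<^sub>R u + (y * c) *\<^sub>R axis j 1) - F (q + y *\<^sub>R u)) / y) \<longlongrightarrow> c * Dj q) (at 0)"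
proof (rule tendstoI)
  fix \<epsilon> :: real assume \<epsilon>: "\<epsilon> > 0"
  have \<epsilon>': "\<epsilon> / (\<bar>c\<bar> + 1) > 0" using \<epsilon> by simp
  obtain \<delta> where \<delta>: "\<delta> > 0" "\<And>x'. dist x' q < \<delta> \<Longrightarrow> dist (Dj x') (Dj q) < \<epsilon> / (\<bar>c\<bar> + 1)"
    using cont \<epsilon>' unfolding continuous_on_iff by blast
  define d where "d = \<delta> / (norm u + \<bar>c\<bar> + 1)"
  have npos: "norm u + \<bar>c\<bar> + 1 > 0" by (simp add: add_nonneg_pos)
  have d: "d > 0" using \<delta>(1) npos by (simp add: d_def)
  show "\<forall>\<^sub>F y in at 0. dist ((F (q + y *\<^sub>R u + (y * c) *\<^sub>R axis j 1) - F (q + y *\<^sub>R u)) / y) (c * Dj q) < \<epsilon>"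
    unfolding eventually_at
  proof (intro exI[of _ d] conjI ballI impI)
    show "d > 0" by (rule d)
    fix y :: real assume "y \<in> UNIV" and y: "y \<noteq> 0 \<and> dist y 0 < d"
    define w where "w = q + y *\<^sub>R u"
    define \<phi> where "\<phi> = (\<lambda>l. F (w + (l * (y * c)) *\<^sub>R axis j 1))"
    have der: "DERIV \<phi> l :> Dj (w + (l * (y * c)) *\<^sub>R axis j 1) * (y * c)" for l
    proof -
      have d1: "((\<lambda>\<tau>. F (w + \<tau> *\<^sub>R axis j 1)) has_real_derivative Dj (w + (l * (y * c)) *\<^sub>R axis j 1)) (at ((\<lambda>l. l * (y * c)) l))"
        using axis_deriv_any[OF ax, of w "l * (y * c)"] by simp
      have d2: "((\<lambda>l. l * (y * c)) has_real_derivative (y * c)) (at l)"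
        by (auto intro!: derivative_eq_intros)
      show ?thesis using DERIV_chain2[OF d1 d2] by (simp add: \<phi>_def)
    qed
    obtain \<xi> where \<xi>: "0 < \<xi>" "\<xi> < 1" "\<phi> 1 - \<phi> 0 = (1 - 0) * (Dj (w + (\<xi> * (y * c)) *\<^sub>R axis j 1) * (y * c))"
      using MVT2[of 0 1 \<phi> "\<lambda>l. Dj (w + (l * (y * c)) *\<^sub>R axis j 1) * (y * c)"] der by auto
    define z where "z = w + (\<xi> * (y * c)) *\<^sub>R axis j 1"
    have A: "(F (q + y *\<^sub>R u + (y * c) *\<^sub>R axis j 1) - F (q + y *\<^sub>R u)) / y = c * Dj z"
      using \<xi>(3) y by (simp add: \<phi>_def w_def z_def field_simps)
    have "dist z q = norm (y *\<^sub>R u + (\<xi> * (y * c)) *\<^sub>R (axis j 1 :: real^'d))"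
      by (simp add: z_def w_def dist_norm)
    also have "\<dots> \<le> norm (y *\<^sub>R u) + norm ((\<xi> * (y * c)) *\<^sub>R (axis j 1 :: real^'d))" by (rule norm_triangle_ineq)
    also have "\<dots> = \<bar>y\<bar> * norm u + \<xi> * (\<bar>y\<bar> * \<bar>c\<bar>)" using \<xi>(1) by (simp add: abs_mult)
    also have "\<dots> \<le> \<bar>y\<bar> * norm u + \<bar>y\<bar> * \<bar>c\<bar>"
      using \<xi>(1,2) mult_left_le_one_le[of "\<bar>y\<bar> * \<bar>c\<bar>" \<xi>] by simp
    also have "\<dots> \<le> \<bar>y\<bar> * (norm u + \<bar>c\<bar> + 1)" by (simp add: algebra_simps)
    also have "\<dots> < d * (norm u + \<bar>c\<bar> + 1)" using y npos by (simp add: mult_strict_right_mono)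
    also have "\<dots> = \<delta>" using npos by (simp add: d_def)
    finally have "dist (Dj z) (Dj q) < \<epsilon> / (\<bar>c\<bar> + 1)" by (rule \<delta>(2))
    then have "\<bar>c\<bar> * dist (Dj z) (Dj q) \<le> \<bar>c\<bar> * (\<epsilon> / (\<bar>c\<bar> + 1))"
      by (intro mult_left_mono) simp_all
    also have "\<dots> < \<epsilon>" using \<epsilon> by (simp add: field_simps)
    finally show "dist ((F (q + y *\<^sub>R u + (y * c) *\<^sub>R axis j 1) - F (q + y *\<^sub>R u)) / y) (c * Dj q) < \<epsilon>"
      unfolding A by (simp add: dist_real_def abs_mult flip: right_diff_distrib)
  qed
qed

lemma chain_PI:
  fixes F :: "real^'d::finite \<Rightarrow> real" and D :: "'d \<Rightarrow> real^'d \<Rightarrow> real"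
  assumes ax: "\<And>i x. ((\<lambda>t. F (x + t *\<^sub>R axis i 1)) has_real_derivative D i x) (at 0)"
    and cont: "\<And>i. continuous_on UNIV (D i)"
    and fin: "finite I"
  shows "((\<lambda>t. F (q + t *\<^sub>R PI I v)) has_real_derivative (\<Sum>i\<in>I. v$i * D i q)) (at 0)"
  using fin
proof (induction I arbitrary: q rule: finite_induct)
  case empty then show ?case by (simp add: PI_def)
next
  case (insert j I)
  let ?u = "PI I v" and ?c = "v$j" and ?e = "axis j 1 :: real^'d"
  have PIi: "PI (insert j I) v = ?c *\<^sub>R ?e + ?u" using insert.hyps by (simp add: PI_def)
  have B: "((\<lambda>y. (F (q + y *\<^sub>R ?u) - F q) / y) \<longlongrightarrow> (\<Sum>i\<in>I. v$i * D i q)) (at 0)"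
    using insert.IH[of q] unfolding has_field_derivative_iff by simp
  have A: "((\<lambda>y. (F (q + y *\<^sub>R ?u + (y * ?c) *\<^sub>R ?e) - F (q + y *\<^sub>R ?u)) / y) \<longlongrightarrow> ?c * D j q) (at 0)"
    by (rule mvt_part[OF ax cont])
  have eq: "(F (q + y *\<^sub>R PI (insert j I) v) - F q) / y =
      (F (q + y *\<^sub>R ?u + (y * ?c) *\<^sub>R ?e) - F (q + y *\<^sub>R ?u)) / y + (F (q + y *\<^sub>R ?u) - F q) / y" for y
  proof -
    have "q + y *\<^sub>R PI (insert j I) v = q + y *\<^sub>R ?u + (y * ?c) *\<^sub>R ?e"
      unfolding PIi by (simp add: algebra_simps)
    then show ?thesis by (simp only: diff_divide_distrib)
  qed
  have "((\<lambda>y. (F (q + y *\<^sub>R PI (insert j I) v) - F q) / y) \<longlongrightarrow> ?c * D j q + (\<Sum>i\<in>I. v$i * D i q)) (at 0)"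
    unfolding eq by (rule tendsto_add[OF A B])
  then show ?case using insert.hyps unfolding has_field_derivative_iff by simp
qed

lemma PI_UNIV: "PI UNIV v = v"
  unfolding PI_def using basis_expansion[of v] by (simp add: scalar_mult_eq_scaleR)

lemma chain_dir:
  fixes F :: "real^'d::finite \<Rightarrow> real" and D :: "'d \<Rightarrow> real^'d \<Rightarrow> real"
  assumes ax: "\<And>i x. ((\<lambda>t. F (x + t *\<^sub>R axis i 1)) has_real_derivative D i x) (at 0)"
    and cont: "\<And>i. continuous_on UNIV (D i)"
  shows "((\<lambda>t. F (p + t *\<^sub>R v)) has_real_derivative (\<Sum>i\<in>UNIV. v$i * D i (p + s *\<^sub>R v))) (at s)"
proof -
  have "((\<lambda>t. F ((p + s *\<^sub>R v) + t *\<^sub>R v)) has_real_derivative (\<Sum>i\<in>UNIV. v$i * D i (p + s *\<^sub>R v))) (at 0)"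
    using chain_PI[OF ax cont, of UNIV "p + s *\<^sub>R v" v] by (simp add: PI_UNIV)
  then have "((\<lambda>t. F (p + (t + s) *\<^sub>R v)) has_real_derivative (\<Sum>i\<in>UNIV. v$i * D i (p + s *\<^sub>R v))) (at 0)"
    by (simp add: algebra_simps scaleR_add_left)
  then show ?thesis using DERIV_shift[of "\<lambda>t. F (p + t *\<^sub>R v)" _ 0 s] by simp
qed

definition LL :: "nat \<Rightarrow> 'd::finite list set" where
  "LL j = {is. set is \<subseteq> UNIV \<and> length is = j}"

lemma LL_finite: "finite (LL j :: 'd::finite list set)"
  unfolding LL_def by (rule finite_lists_length_eq) simp

lemma LL_card: "card (LL j :: 'd::finite list set) = CARD('d) ^ j"
  unfolding LL_def by (rule card_lists_length_eq) simp

definition gd :: "(real^'d::finite \<Rightarrow> real) \<Rightarrow> real^'d \<Rightarrow> real^'d \<Rightarrow> nat \<Rightarrow> real \<Rightarrow> real" where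
  "gd f p v j s = (\<Sum>is\<in>LL j. prod_list (map (\<lambda>i. v$i) is) * iter_partial is f (p + s *\<^sub>R v))"

lemma gd_0:
  fixes f :: "real^'d::finite \<Rightarrow> real"
  shows "gd f p v 0 s = f (p + s *\<^sub>R v)"
proof -
  have "(LL 0 :: 'd list set) = {[]}" by (auto simp: LL_def)
  then show ?thesis by (simp add: gd_def)
qed

lemma Ck_axis:
  assumes "Ck k f" "length is < k"
  shows "((\<lambda>t. iter_partial is f (x + t *\<^sub>R axis i 1)) has_real_derivative iter_partial (i # is) f x) (at 0)"
proof -
  have "(\<lambda>t. iter_partial is f (x + t *\<^sub>R axis i 1)) differentiable (at 0)"
    using assms unfolding Ck_def by blast
  then have "((\<lambda>t. iter_partial is f (x + t *\<^sub>R axis i 1)) has_real_derivative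
      deriv (\<lambda>t. iter_partial is f (x + t *\<^sub>R axis i 1)) 0) (at 0)"
    using DERIV_deriv_iff_real_differentiable by blast
  then show ?thesis by (simp add: partial_dir_def)
qed

lemma Ck_cont:
  assumes "Ck k f" "length is \<le> k"
  shows "continuous_on UNIV (iter_partial is f)"
  using assms unfolding Ck_def by blast

lemma gd_deriv:
  fixes f :: "real^'d::finite \<Rightarrow> real"
  assumes ck: "Ck k f" and jk: "j < k"
  shows "DERIV (gd f p v j) s :> gd f p v (Suc j) s"
proof -
  have trm: "((\<lambda>s. prod_list (map (\<lambda>i. v$i) is) * iter_partial is f (p + s *\<^sub>R v)) has_real_derivative
      prod_list (map (\<lambda>i. v$i) is) * (\<Sum>i\<in>UNIV. v$i * iter_partial (i # is) f (p + s *\<^sub>R v))) (at s)"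
    if "is \<in> LL j" for "is"
  proof -
    have len: "length is = j" using that by (simp add: LL_def)
    have "((\<lambda>s. iter_partial is f (p + s *\<^sub>R v)) has_real_derivative
        (\<Sum>i\<in>UNIV. v$i * iter_partial (i # is) f (p + s *\<^sub>R v))) (at s)"
    proof (rule chain_dir[where D = "\<lambda>i. iter_partial (i # is) f"])
      show "((\<lambda>t. iter_partial is f (x + t *\<^sub>R axis i 1)) has_real_derivative iter_partial (i # is) f x) (at 0)" for i x
        by (rule Ck_axis[OF ck]) (use len jk in simp)
      show "continuous_on UNIV (iter_partial (i # is) f)" for i
        by (rule Ck_cont[OF ck]) (use len jk in simp)
    qed
    then show ?thesis by (rule DERIV_cmult)
  qed
  have "DERIV (gd f p v j) s :> (\<Sum>is\<in>LL j. prod_list (map (\<lambda>i. v$i) is) * (\<Sum>i\<in>UNIV. v$i * iter_partial (i # is) f (p + s *\<^sub>R v)))"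
    unfolding gd_def by (rule DERIV_sum) (rule trm)
  also have "(\<Sum>is\<in>LL j. prod_list (map (\<lambda>i. v$i) is) * (\<Sum>i\<in>UNIV. v$i * iter_partial (i # is) f (p + s *\<^sub>R v)))
      = gd f p v (Suc j) s"
  proof -
    have LS: "LL (Suc j) = (\<lambda>(xs, n). n # xs) ` (LL j \<times> UNIV)"
      unfolding LL_def by (rule lists_length_Suc_eq)
    have inj: "inj_on (\<lambda>(xs, n). n # xs) (LL j \<times> (UNIV :: 'd set))"
      by (auto simp: inj_on_def)
    have "gd f p v (Suc j) s = (\<Sum>(xs, n)\<in>LL j \<times> UNIV. prod_list (map (\<lambda>i. v$i) (n # xs)) * iter_partial (n # xs) f (p + s *\<^sub>R v))"
      unfolding gd_def LS by (subst sum.reindex[OF inj]) (simp add: case_prod_unfold)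
    also have "\<dots> = (\<Sum>xs\<in>LL j. \<Sum>n\<in>UNIV. prod_list (map (\<lambda>i. v$i) (n # xs)) * iter_partial (n # xs) f (p + s *\<^sub>R v))"
      by (rule sum.cartesian_product[symmetric])
    also have "\<dots> = (\<Sum>xs\<in>LL j. prod_list (map (\<lambda>i. v$i) xs) * (\<Sum>i\<in>UNIV. v$i * iter_partial (i # xs) f (p + s *\<^sub>R v)))"
      by (simp add: sum_distrib_left algebra_simps)
    finally show ?thesis by simp
  qed
  finally show ?thesis .
qed

lemma prod_list_abs_le: "\<bar>prod_list (map (\<lambda>i. v$i) is)\<bar> \<le> norm v ^ length is"
  for v :: "real^'d::finite"
proof (induction "is")
  case Nil then show ?case by simp
next
  case (Cons i "is")
  have "\<bar>v$i * prod_list (map (\<lambda>i. v$i) is)\<bar> = \<bar>v$i\<bar> * \<bar>prod_list (map (\<lambda>i. v$i) is)\<bar>" by (simp add: abs_mult)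
  also have "\<dots> \<le> norm v * norm v ^ length is"
    by (intro mult_mono component_le_norm_cart Cons.IH) simp_all
  finally show ?case by simp
qed

lemma Dk_le:
  assumes "bdd_above (Dk_vals k f)" "length is = k"
  shows "\<bar>iter_partial is f z\<bar> \<le> Dk_sup k f"
  unfolding Dk_sup_def by (rule cSup_upper) (use assms in \<open>auto simp: Dk_vals_def\<close>)

lemma Dk_sup_nonneg:
  fixes f :: "real^'d::finite \<Rightarrow> real"
  assumes "bdd_above (Dk_vals k f)"
  shows "Dk_sup k f \<ge> 0"
  using Dk_le[OF assms, of "replicate k undefined" 0] by simp

lemma gd_bound:
  fixes f :: "real^'d::finite \<Rightarrow> real"
  assumes bdd: "bdd_above (Dk_vals k f)"
  shows "\<bar>gd f p v k s\<bar> \<le> real CARD('d) ^ k * norm v ^ k * Dk_sup k f"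
proof -
  have "\<bar>gd f p v k s\<bar> \<le> (\<Sum>is\<in>LL k. \<bar>prod_list (map (\<lambda>i. v$i) is) * iter_partial is f (p + s *\<^sub>R v)\<bar>)"
    unfolding gd_def by (rule sum_abs)
  also have "\<dots> \<le> of_nat (card (LL k :: 'd list set)) * (norm v ^ k * Dk_sup k f)"
  proof (rule sum_bounded_above)
    fix "is" assume "is \<in> (LL k :: 'd list set)"
    then have len: "length is = k" by (simp add: LL_def)
    show "\<bar>prod_list (map (\<lambda>i. v$i) is) * iter_partial is f (p + s *\<^sub>R v)\<bar> \<le> norm v ^ k * Dk_sup k f"
      unfolding abs_mult
      by (rule mult_mono) (use prod_list_abs_le[of v "is"] Dk_le[OF bdd len] len in auto)
  qed
  finally show ?thesis by (simp add: LL_card)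
qed

lemma sqrt_pow_even: "h \<ge> 0 \<Longrightarrow> (sqrt h * y) ^ (2 * M) = h ^ M * y ^ (2 * M)"
  by (simp add: power_mult_distrib power_mult)

lemma quad_err:
  fixes g :: "real \<Rightarrow> real" and c :: "nat \<Rightarrow> real"
  assumes h: "h \<ge> 0" and K: "K \<ge> 0"
    and cont: "continuous_on UNIV g"
    and tay: "\<And>s. \<bar>g s - (\<Sum>k<2 * Suc m. c k * s ^ k)\<bar> \<le> K * s ^ (2 * Suc m)"
  shows "\<bar>(LINT y|lborel. std_normal_density y * g (sqrt h * y))
           - (\<Sum>z\<in>HR (Suc m). wq m z * g (sqrt h * (sqrt 2 * z)))\<bar>
         \<le> K * h ^ Suc m * (fact (2 * Suc m) / (2 ^ Suc m * fact (Suc m))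
              + (\<Sum>z\<in>HR (Suc m). \<bar>wq m z\<bar> * (2 * z\<^sup>2) ^ Suc m))"
proof -
  define n where "n = 2 * Suc m"
  define Tp where "Tp = (\<lambda>s. \<Sum>k<n. c k * s ^ k)"
  define R where "R = (\<lambda>s. g s - Tp s)"
  define \<phi> where "\<phi> = std_normal_density"
  define mn :: real where "mn = fact (2 * Suc m) / (2 ^ Suc m * fact (Suc m))"
  have Rb: "\<bar>R s\<bar> \<le> K * s ^ n" for s using tay[of s] by (simp add: R_def Tp_def n_def)
  have phi_nn: "\<phi> y \<ge> 0" for y by (simp add: \<phi>_def)
  have contT: "continuous_on UNIV Tp" unfolding Tp_def by (intro continuous_intros)
  have lin: "continuous_on UNIV (\<lambda>y::real. sqrt h * y)" by (intro continuous_intros)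
  have cg: "continuous_on UNIV (\<lambda>y. g (sqrt h * y))"
    by (rule continuous_on_compose2[OF cont lin]) simp
  have cT: "continuous_on UNIV (\<lambda>y. Tp (sqrt h * y))"
    by (rule continuous_on_compose2[OF contT lin]) simp
  have contR: "continuous_on UNIV (\<lambda>y. R (sqrt h * y))"
    unfolding R_def by (rule continuous_on_diff[OF cg cT])
  have mR: "(\<lambda>y. \<phi> y * R (sqrt h * y)) \<in> borel_measurable lborel"
    unfolding \<phi>_def measurable_lborel2
    by (intro borel_measurable_times borel_measurable_normal_density borel_measurable_continuous_onI contR)
  have int_mom: "integrable lborel (\<lambda>y. \<phi> y * y ^ k)" for k
    unfolding \<phi>_def by (rule integrable_std_normal_moment)
  have eqT: "\<phi> y * Tp (sqrt h * y) = (\<Sum>k<n. (c k * sqrt h ^ k) * (\<phi> y * y ^ k))" for y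
    unfolding Tp_def by (simp add: sum_distrib_left power_mult_distrib algebra_simps)
  have int_T: "integrable lborel (\<lambda>y. \<phi> y * Tp (sqrt h * y))"
    unfolding eqT using int_mom by auto
  have int_maj: "integrable lborel (\<lambda>y. K * h ^ Suc m * (\<phi> y * y ^ n))"
    using int_mom by auto
  have bnd: "\<bar>\<phi> y * R (sqrt h * y)\<bar> \<le> K * h ^ Suc m * (\<phi> y * y ^ n)" for y
  proof -
    have "\<bar>\<phi> y * R (sqrt h * y)\<bar> = \<phi> y * \<bar>R (sqrt h * y)\<bar>" using phi_nn by (simp add: abs_mult)
    also have "\<dots> \<le> \<phi> y * (K * (sqrt h * y) ^ n)" by (rule mult_left_mono[OF Rb phi_nn])
    also have "(sqrt h * y) ^ n = h ^ Suc m * y ^ n"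
      unfolding n_def by (rule sqrt_pow_even[OF h])
    also have "\<phi> y * (K * (h ^ Suc m * y ^ n)) = K * h ^ Suc m * (\<phi> y * y ^ n)"
      by (simp only: mult_ac)
    finally show ?thesis .
  qed
  have maj_nn: "K * h ^ Suc m * (\<phi> y * y ^ n) \<ge> 0" for y
  proof -
    have "y ^ n \<ge> 0" unfolding n_def by (rule zero_le_even_power) simp
    then show ?thesis using K h phi_nn by (intro mult_nonneg_nonneg) simp_all
  qed
  have int_R: "integrable lborel (\<lambda>y. \<phi> y * R (sqrt h * y))"
    by (rule Bochner_Integration.integrable_bound[OF int_maj mR]) (use bnd maj_nn in \<open>auto\<close>)
  have I1: "(LINT y|lborel. \<phi> y * g (sqrt h * y)) = (LINT y|lborel. \<phi> y * Tp (sqrt h * y)) + (LINT y|lborel. \<phi> y * R (sqrt h * y))"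
  proof -
    have "(LINT y|lborel. \<phi> y * g (sqrt h * y)) = (LINT y|lborel. \<phi> y * Tp (sqrt h * y) + \<phi> y * R (sqrt h * y))"
      by (simp add: R_def algebra_simps)
    also have "\<dots> = (LINT y|lborel. \<phi> y * Tp (sqrt h * y)) + (LINT y|lborel. \<phi> y * R (sqrt h * y))"
      by (rule Bochner_Integration.integral_add[OF int_T int_R])
    finally show ?thesis .
  qed
  have IT: "(LINT y|lborel. \<phi> y * Tp (sqrt h * y)) = (\<Sum>k<n. (c k * sqrt h ^ k) * (sqrt 2 ^ k * mom k))"
  proof -
    have "(LINT y|lborel. \<phi> y * Tp (sqrt h * y)) = (LINT y|lborel. (\<Sum>k<n. (c k * sqrt h ^ k) * (\<phi> y * y ^ k)))"
      unfolding eqT ..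
    also have "\<dots> = (\<Sum>k<n. (c k * sqrt h ^ k) * (LINT y|lborel. \<phi> y * y ^ k))"
      using int_mom by (simp add: Bochner_Integration.integral_sum)
    also have "\<dots> = (\<Sum>k<n. (c k * sqrt h ^ k) * (sqrt 2 ^ k * mom k))"
    proof -
      have "(LINT y|lborel. \<phi> y * y ^ k) = sqrt 2 ^ k * mom k" for k
        using normal_mom[of k] has_bochner_integral_integral_eq unfolding \<phi>_def by blast
      then show ?thesis by simp
    qed
    finally show ?thesis .
  qed
  have ST: "(\<Sum>z\<in>HR (Suc m). wq m z * Tp (sqrt h * (sqrt 2 * z))) = (\<Sum>k<n. (c k * sqrt h ^ k) * (sqrt 2 ^ k * mom k))"
  proof -
    have "(\<Sum>z\<in>HR (Suc m). wq m z * Tp (sqrt h * (sqrt 2 * z)))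
        = (\<Sum>k<n. (c k * sqrt h ^ k * sqrt 2 ^ k) * (\<Sum>z\<in>HR (Suc m). wq m z * z ^ k))"
    proof -
      have "(\<Sum>z\<in>HR (Suc m). wq m z * Tp (sqrt h * (sqrt 2 * z)))
          = (\<Sum>z\<in>HR (Suc m). \<Sum>k<n. wq m z * (c k * (sqrt h * (sqrt 2 * z)) ^ k))"
        unfolding Tp_def by (simp only: sum_distrib_left)
      also have "\<dots> = (\<Sum>k<n. \<Sum>z\<in>HR (Suc m). wq m z * (c k * (sqrt h * (sqrt 2 * z)) ^ k))"
        by (rule sum.swap)
      also have "\<dots> = (\<Sum>k<n. (c k * sqrt h ^ k * sqrt 2 ^ k) * (\<Sum>z\<in>HR (Suc m). wq m z * z ^ k))"
        by (rule sum.cong[OF refl]) (simp add: sum_distrib_left power_mult_distrib mult_ac)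
      finally show ?thesis .
    qed
    also have "\<dots> = (\<Sum>k<n. (c k * sqrt h ^ k) * (sqrt 2 ^ k * mom k))"
      by (rule sum.cong[OF refl]) (simp add: quad_monom n_def)
    finally show ?thesis .
  qed
  have S1: "(\<Sum>z\<in>HR (Suc m). wq m z * g (sqrt h * (sqrt 2 * z)))
      = (\<Sum>z\<in>HR (Suc m). wq m z * Tp (sqrt h * (sqrt 2 * z))) + (\<Sum>z\<in>HR (Suc m). wq m z * R (sqrt h * (sqrt 2 * z)))"
    by (simp add: R_def right_diff_distrib sum_subtractf)
  have diff: "(LINT y|lborel. \<phi> y * g (sqrt h * y)) - (\<Sum>z\<in>HR (Suc m). wq m z * g (sqrt h * (sqrt 2 * z)))
      = (LINT y|lborel. \<phi> y * R (sqrt h * y)) - (\<Sum>z\<in>HR (Suc m). wq m z * R (sqrt h * (sqrt 2 * z)))"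
    using I1 IT ST S1 by simp
  have B1: "\<bar>LINT y|lborel. \<phi> y * R (sqrt h * y)\<bar> \<le> K * h ^ Suc m * mn"
  proof -
    have "\<bar>LINT y|lborel. \<phi> y * R (sqrt h * y)\<bar> \<le> (LINT y|lborel. norm (\<phi> y * R (sqrt h * y)))"
      using integral_norm_bound[of lborel "\<lambda>y. \<phi> y * R (sqrt h * y)"] by simp
    also have "\<dots> \<le> (LINT y|lborel. K * h ^ Suc m * (\<phi> y * y ^ n))"
      by (rule Bochner_Integration.integral_mono) (use int_R int_maj bnd in auto)
    also have "\<dots> = K * h ^ Suc m * mn"
      using integral_std_normal_moment_even[of "Suc m"] by (simp add: \<phi>_def n_def mn_def)
    finally show ?thesis .
  qed
  have B2: "\<bar>\<Sum>z\<in>HR (Suc m). wq m z * R (sqrt h * (sqrt 2 * z))\<bar>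
      \<le> K * h ^ Suc m * (\<Sum>z\<in>HR (Suc m). \<bar>wq m z\<bar> * (2 * z\<^sup>2) ^ Suc m)"
  proof -
    have "\<bar>\<Sum>z\<in>HR (Suc m). wq m z * R (sqrt h * (sqrt 2 * z))\<bar> \<le> (\<Sum>z\<in>HR (Suc m). \<bar>wq m z * R (sqrt h * (sqrt 2 * z))\<bar>)"
      by (rule sum_abs)
    also have "\<dots> \<le> (\<Sum>z\<in>HR (Suc m). K * h ^ Suc m * (\<bar>wq m z\<bar> * (2 * z\<^sup>2) ^ Suc m))"
    proof (rule sum_mono)
      fix z
      have e2: "(sqrt 2 * z) ^ 2 = 2 * z\<^sup>2" by (simp add: power_mult_distrib)
      have "(sqrt h * (sqrt 2 * z)) ^ n = h ^ Suc m * (sqrt 2 * z) ^ (2 * Suc m)"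
        unfolding n_def by (rule sqrt_pow_even[OF h])
      also have "(sqrt 2 * z) ^ (2 * Suc m) = (2 * z\<^sup>2) ^ Suc m" by (simp only: power_mult e2)
      finally have "(sqrt h * (sqrt 2 * z)) ^ n = h ^ Suc m * (2 * z\<^sup>2) ^ Suc m" .
      then have "\<bar>R (sqrt h * (sqrt 2 * z))\<bar> \<le> K * (h ^ Suc m * (2 * z\<^sup>2) ^ Suc m)"
        using Rb[of "sqrt h * (sqrt 2 * z)"] by simp
      then have "\<bar>wq m z\<bar> * \<bar>R (sqrt h * (sqrt 2 * z))\<bar> \<le> \<bar>wq m z\<bar> * (K * (h ^ Suc m * (2 * z\<^sup>2) ^ Suc m))"
        by (rule mult_left_mono) simp
      then show "\<bar>wq m z * R (sqrt h * (sqrt 2 * z))\<bar> \<le> K * h ^ Suc m * (\<bar>wq m z\<bar> * (2 * z\<^sup>2) ^ Suc m)"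
        unfolding abs_mult by (simp only: mult_ac)
    qed
    also have "\<dots> = K * h ^ Suc m * (\<Sum>z\<in>HR (Suc m). \<bar>wq m z\<bar> * (2 * z\<^sup>2) ^ Suc m)"
      by (simp add: sum_distrib_left)
    finally show ?thesis .
  qed
  have "\<bar>(LINT y|lborel. \<phi> y * g (sqrt h * y)) - (\<Sum>z\<in>HR (Suc m). wq m z * g (sqrt h * (sqrt 2 * z)))\<bar>
      \<le> K * h ^ Suc m * mn + K * h ^ Suc m * (\<Sum>z\<in>HR (Suc m). \<bar>wq m z\<bar> * (2 * z\<^sup>2) ^ Suc m)"
    unfolding diff using B1 B2 by linarith
  then show ?thesis by (simp add: \<phi>_def mn_def distrib_left)
qed

lemma hermite_zeros_HR: "hermite_zeros M = HR M"
  by (simp add: hermite_zeros_def hermite_poly)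

lemma gh_aux:
  fixes q H s A F :: real
  assumes "q \<noteq> 0" "H \<noteq> 0" "s \<noteq> 0"
  shows "(A * (q * F) * s / (q\<^sup>2 * H\<^sup>2)) / s = A * F / (q * H\<^sup>2)"
  using assms by (simp add: field_simps power2_eq_square)

lemma gh_lambda_wq: "gh_lambda (Suc m) z = wq m z"
proof (cases "poly (hp m) z = 0")
  case True
  then show ?thesis by (simp add: gh_lambda_def gh_omega_def wq_def hermite_poly)
next
  case False
  have e: "gh_lambda (Suc m) z = (2 ^ m * (real (Suc m) * fact m) * sqrt pi / ((real (Suc m))\<^sup>2 * (poly (hp m) z)\<^sup>2)) / sqrt pi"
    unfolding gh_lambda_def gh_omega_def hermite_poly by (simp only: diff_Suc_1 fact_Suc of_nat_mult)
  have w: "wq m z = 2 ^ m * fact m / (real (Suc m) * (poly (hp m) z)\<^sup>2)"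
    by (simp add: wq_def)
  show ?thesis unfolding e w by (rule gh_aux) (use False in simp_all)
qed

lemma one_plus_pow: "(a::real) \<ge> 0 \<Longrightarrow> (1 + a) ^ k \<le> 2 ^ k * (1 + a ^ k)"
proof -
  assume a: "a \<ge> 0"
  have "1 + a \<le> 2 * max 1 a" by simp
  then have "(1 + a) ^ k \<le> (2 * max 1 a) ^ k" by (rule power_mono) (use a in simp)
  also have "\<dots> = 2 ^ k * max 1 a ^ k" by (simp add: power_mult_distrib)
  also have "max 1 a ^ k \<le> 1 + a ^ k"
    using a by (cases "a \<le> 1") (auto simp: max_def)
  then have "2 ^ k * max 1 a ^ k \<le> 2 ^ k * (1 + a ^ k)" by simp
  finally show ?thesis .
qed

lemma one_step:
  fixes f :: "real^'d::finite \<Rightarrow> real"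
  assumes ck: "Ck (2 * Suc m) f" and bdd: "bdd_above (Dk_vals (2 * Suc m) f)" and h: "h \<ge> 0"
  shows "\<bar>(LINT y|lborel. std_normal_density y * f (p + (sqrt h * y) *\<^sub>R v))
           - (\<Sum>z\<in>HR (Suc m). wq m z * f (p + (sqrt h * (sqrt 2 * z)) *\<^sub>R v))\<bar>
         \<le> (real CARD('d) ^ (2 * Suc m) * norm v ^ (2 * Suc m) * Dk_sup (2 * Suc m) f / fact (2 * Suc m))
            * h ^ Suc m * (fact (2 * Suc m) / (2 ^ Suc m * fact (Suc m))
              + (\<Sum>z\<in>HR (Suc m). \<bar>wq m z\<bar> * (2 * z\<^sup>2) ^ Suc m))"
proof (rule quad_err[OF h])
  let ?n = "2 * Suc m"
  let ?K = "real CARD('d) ^ ?n * norm v ^ ?n * Dk_sup ?n f / fact ?n"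
  show "?K \<ge> 0" using Dk_sup_nonneg[OF bdd] by simp
  have fc: "continuous_on UNIV f" using Ck_cont[OF ck, of "[]"] by simp
  show "continuous_on UNIV (\<lambda>s. f (p + s *\<^sub>R v))"
    by (rule continuous_on_compose2[OF fc]) (auto intro!: continuous_intros)
  fix s :: real
  have d0: "gd f p v 0 = (\<lambda>s. f (p + s *\<^sub>R v))" by (rule ext) (rule gd_0)
  have dd: "\<forall>k t. k < ?n \<and> \<bar>t\<bar> \<le> \<bar>s\<bar> \<longrightarrow> DERIV (gd f p v k) t :> gd f p v (Suc k) t"
    using gd_deriv[OF ck] by blast
  obtain \<tau> where "\<bar>\<tau>\<bar> \<le> \<bar>s\<bar>" and tay: "f (p + s *\<^sub>R v) = (\<Sum>k<?n. gd f p v k 0 / fact k * s ^ k) + gd f p v ?n \<tau> / fact ?n * s ^ ?n"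
    using Maclaurin_bi_le[OF d0 dd] by blast
  have sp: "s ^ ?n \<ge> 0" by (rule zero_le_even_power) simp
  have "\<bar>gd f p v ?n \<tau> / fact ?n * s ^ ?n\<bar> = \<bar>gd f p v ?n \<tau>\<bar> / fact ?n * s ^ ?n"
    using sp by (simp add: abs_mult)
  also have "\<dots> \<le> ?K * s ^ ?n"
    using gd_bound[OF bdd, of p v \<tau>] sp by (simp add: divide_right_mono mult_right_mono)
  finally show "\<bar>f (p + s *\<^sub>R v) - (\<Sum>k<?n. gd f p v k 0 / fact k * s ^ k)\<bar> \<le> ?K * s ^ ?n"
    using tay by simp
qed

theorem proposition3p2:
  fixes T C0 :: real and M :: nat
    and A :: "(real^'q) set"
    and \<mu> \<sigma> :: "real \<Rightarrow> real^'d \<Rightarrow> real^'q \<Rightarrow> real^'d"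
  assumes T_pos: "T > 0"
    and A_compact: "compact A"
    and C0_nonneg: "C0 \<ge> 0"
    and mu_cont: "continuous_on ({0..T} \<times> UNIV \<times> A) (\<lambda>(t, x, a). \<mu> t x a)"
    and sigma_cont: "continuous_on ({0..T} \<times> UNIV \<times> A) (\<lambda>(t, x, a). \<sigma> t x a)"
    and lip: "\<And>t s x y a. t \<in> {0..T} \<Longrightarrow> s \<in> {0..T} \<Longrightarrow> a \<in> A \<Longrightarrow>
               norm (\<mu> t x a - \<mu> s y a) + norm (\<sigma> t x a - \<sigma> s y a)
                 \<le> C0 * (norm (x - y) + sqrt \<bar>t - s\<bar>)"
    and M_ge: "M \<ge> 2"
  shows "\<exists>Chat \<ge> 0. \<forall>f :: real^'d \<Rightarrow> real. Ck (2 * M) f \<longrightarrow> bdd_above (Dk_vals (2 * M) f) \<longrightarrow>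
           (\<forall>N :: nat. N \<ge> 1 \<longrightarrow> (\<forall>n < N. \<forall>x. \<forall>a \<in> A.
              (let h = T / real N; t = real n * h in
                \<bar>EM_expect \<mu> \<sigma> f h t x a - GH_expect M \<mu> \<sigma> f h t x a\<bar>
                  \<le> Chat * Dk_sup (2 * M) f * (1 + norm x ^ (2 * M)) * h ^ M)))"
proof -
  obtain m where Mm: "M = Suc m" using M_ge by (cases M) auto
  have T0: "0 \<in> {0..T}" using T_pos by simp
  obtain S0 where S0: "S0 \<ge> 0" "\<And>a. a \<in> A \<Longrightarrow> norm (\<sigma> 0 0 a) \<le> S0"
  proof -
    have c0: "continuous_on A (\<lambda>a. ((0::real), (0::real^'d), a))" by (intro continuous_intros)
    have "continuous_on A (\<lambda>a. (\<lambda>(t, x, a). \<sigma> t x a) ((0::real), (0::real^'d), a))"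
      by (rule continuous_on_compose2[OF sigma_cont c0]) (use T0 in auto)
    then have c: "continuous_on A (\<lambda>a. \<sigma> 0 0 a)" by simp
    have "compact ((\<lambda>a. \<sigma> 0 0 a) ` A)" by (rule compact_continuous_image[OF c A_compact])
    then have "bounded ((\<lambda>a. \<sigma> 0 0 a) ` A)" by (rule compact_imp_bounded)
    then obtain B where B: "\<forall>y\<in>(\<lambda>a. \<sigma> 0 0 a) ` A. norm y \<le> B" by (auto simp: bounded_iff)
    show ?thesis by (rule that[of "max B 0"]) (use B in force)+
  qed
  define L where "L = S0 + C0 * sqrt T + C0"
  have L0: "L \<ge> 0" using S0 C0_nonneg T_pos by (simp add: L_def)
  define n where "n = 2 * M"
  define CM where "CM = fact n / (2 ^ M * fact M) + (\<Sum>z\<in>HR M. \<bar>wq m z\<bar> * (2 * z\<^sup>2) ^ M)"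
  have CM0: "CM \<ge> 0" unfolding CM_def by (intro add_nonneg_nonneg divide_nonneg_nonneg sum_nonneg) simp_all
  define Chat where "Chat = CM / fact n * real CARD('d) ^ n * (2 * L) ^ n"
  have Chat0: "Chat \<ge> 0" using CM0 L0 by (simp add: Chat_def)
  show ?thesis
  proof (intro exI[of _ Chat] conjI allI impI ballI)
    show "Chat \<ge> 0" by (rule Chat0)
    fix f :: "real^'d \<Rightarrow> real" assume ck: "Ck (2 * M) f" and bdd: "bdd_above (Dk_vals (2 * M) f)"
    fix N :: nat assume N: "N \<ge> 1"
    fix k :: nat and x :: "real^'d" and a assume kN: "k < N" and aA: "a \<in> A"
    define h where "h = T / real N"
    define t where "t = real k * h"
    have h0: "h \<ge> 0" using T_pos by (simp add: h_def)
    have t0: "t \<ge> 0" using h0 by (simp add: t_def)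
    have tT: "t \<le> T"
    proof -
      have "real k \<le> real N" using kN by simp
      then have "real k * (T / real N) \<le> real N * (T / real N)"
        using T_pos by (intro mult_right_mono) simp_all
      also have "\<dots> = T" using N by simp
      finally show ?thesis by (simp add: t_def h_def)
    qed
    define v where "v = \<sigma> t x a"
    define p where "p = x + h *\<^sub>R \<mu> t x a"
    define D where "D = Dk_sup (2 * M) f"
    have D0: "D \<ge> 0" unfolding D_def by (rule Dk_sup_nonneg[OF bdd])
    have nv: "norm v \<le> L * (1 + norm x)"
    proof -
      have "norm (\<mu> t x a - \<mu> 0 0 a) + norm (\<sigma> t x a - \<sigma> 0 0 a) \<le> C0 * (norm (x - 0) + sqrt \<bar>t - 0\<bar>)"
        by (rule lip) (use t0 tT T0 aA in auto)
      then have "norm (\<mu> t x a - \<mu> 0 0 a) + norm (\<sigma> t x a - \<sigma> 0 0 a) \<le> C0 * (norm x + sqrt t)"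
        using t0 by simp
      then have "norm (\<sigma> t x a - \<sigma> 0 0 a) \<le> C0 * (norm x + sqrt t)"
        using norm_ge_zero[of "\<mu> t x a - \<mu> 0 0 a"] by linarith
      moreover have "sqrt t \<le> sqrt T" using tT by simp
      ultimately have "norm (\<sigma> t x a - \<sigma> 0 0 a) \<le> C0 * norm x + C0 * sqrt T"
        using C0_nonneg by (smt (verit) mult_left_mono distrib_left)
      moreover have "norm (\<sigma> t x a) \<le> norm (\<sigma> 0 0 a) + norm (\<sigma> t x a - \<sigma> 0 0 a)"
        by (rule norm_triangle_sub)
      ultimately have "norm v \<le> S0 + C0 * norm x + C0 * sqrt T" using S0(2)[OF aA] by (simp add: v_def)
      also have "\<dots> \<le> L * (1 + norm x)"
      proof -
        have p1: "0 \<le> S0 * norm x" using S0(1) by simp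
        have p2: "0 \<le> C0 * (sqrt T * norm x)" using C0_nonneg T_pos by simp
        show ?thesis using p1 p2 C0_nonneg by (simp add: L_def algebra_simps)
      qed
      finally show ?thesis .
    qed
    have vn: "norm v ^ n \<le> (2 * L) ^ n * (1 + norm x ^ n)"
    proof -
      have "norm v ^ n \<le> (L * (1 + norm x)) ^ n" by (rule power_mono[OF nv]) simp
      also have "\<dots> = L ^ n * (1 + norm x) ^ n" by (simp add: power_mult_distrib)
      also have "\<dots> \<le> L ^ n * (2 ^ n * (1 + norm x ^ n))"
        by (rule mult_left_mono[OF one_plus_pow]) (use L0 in simp_all)
      also have "\<dots> = (2 * L) ^ n * (1 + norm x ^ n)" by (simp add: power_mult_distrib)
      finally show ?thesis .
    qed
    have EM: "EM_expect \<mu> \<sigma> f h t x a = (LINT y|lborel. std_normal_density y * f (p + (sqrt h * y) *\<^sub>R v))"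
      by (simp add: EM_expect_def p_def v_def)
    have GH: "GH_expect M \<mu> \<sigma> f h t x a = (\<Sum>z\<in>HR (Suc m). wq m z * f (p + (sqrt h * (sqrt 2 * z)) *\<^sub>R v))"
      by (simp add: GH_expect_def p_def v_def hermite_zeros_HR Mm gh_lambda_wq)
    have "\<bar>EM_expect \<mu> \<sigma> f h t x a - GH_expect M \<mu> \<sigma> f h t x a\<bar>
        \<le> (real CARD('d) ^ n * norm v ^ n * D / fact n) * h ^ M * CM"
      unfolding EM GH using one_step[of m f h p v] ck bdd h0
      by (simp add: Mm n_def D_def CM_def)
    also have "\<dots> = (real CARD('d) ^ n * D / fact n * h ^ M * CM) * norm v ^ n" by (simp add: field_simps)
    also have "\<dots> \<le> (real CARD('d) ^ n * D / fact n * h ^ M * CM) * ((2 * L) ^ n * (1 + norm x ^ n))"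
      by (rule mult_left_mono[OF vn]) (use D0 h0 CM0 in simp)
    also have "\<dots> = Chat * D * (1 + norm x ^ n) * h ^ M" by (simp add: Chat_def field_simps)
    finally show "let h = T / real N; t = real k * h in
        \<bar>EM_expect \<mu> \<sigma> f h t x a - GH_expect M \<mu> \<sigma> f h t x a\<bar>
          \<le> Chat * Dk_sup (2 * M) f * (1 + norm x ^ (2 * M)) * h ^ M"
      by (simp add: Let_def h_def[symmetric] t_def[symmetric] D_def n_def)
  qed
qed

end
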